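(* Let $(p_k)$, $q$, $\mathbf Q$ and $(\phi_{n+1},\psi_{n+1})_{n\ge0}$ be as in the context. There exists a constant $C_\psi$ depending only on $(p_k)_{k\ge0}$ such that for all $n\ge0$ and $k\ge0$, $\mathbf Q[\psi_{n+1}=k]\le C_\psi\,k\,q^k$. In particular $\sup_{i\ge1}E_{\mathbf Q}[\psi_i]<\infty$.
   Context: $(p_k)_{k\ge0}$ is a probability distribution on $\{0,1,\dots\}$ with generating function $\mathbf f$, $p_0>0$ and $\mathbf f'(1)\in(1,\infty)$; $q\in(0,1)$ is its extinction probability ($\mathbf f(q)=q$). $\mathbf Q$ is the law of a Galton–Watson tree with offspring distribution $q_k=p_kq^{k-1}$, $k\ge0$ (a subcritical law with mean $\mathbf f'(q)<1$); under $\mathbf Q$, $Z_n$ is the number of vertices in generation $n$ and $H=\max\{n:Z_n>0\}$. On an enlarged probability space (still denoted $\mathbf Q$), $(\phi_{n+1},\psi_{n+1})_{n\ge0}$ are independent pairs of random variables with $\mathbf Q[\phi_{n+1}=j,\psi_{n+1}=k]=c_nq_k\mathbf Q[Z_n=0]^{j-1}\mathbf Q[Z_{n+1}=0]^{k-j}$ for $1\le j\le k$, $k\ge1$, where $c_n=\mathbf Q[H=n]/\mathbf Q[H=n+1]$. *)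

theory Defs
  imports "HOL-Probability.Probability"
begin

definition gen_fun :: "nat pmf \<Rightarrow> real \<Rightarrow> real" where
  "gen_fun p s = (\<Sum>k. pmf p k * s ^ k)"

primrec iid_sum :: "nat pmf \<Rightarrow> nat \<Rightarrow> nat pmf" where
  "iid_sum off 0 = return_pmf 0"
| "iid_sum off (Suc z) = bind_pmf off (\<lambda>x. map_pmf (\<lambda>y. x + y) (iid_sum off z))"

text \<open>Law of the pair (Z_n, Z_(n+1)) of generation sizes of a Galton--Watson tree
  with offspring law off, started from one ancestor.\<close>
primrec gw_Z :: "nat pmf \<Rightarrow> nat \<Rightarrow> nat pmf" where
  "gw_Z off 0 = return_pmf 1"
| "gw_Z off (Suc n) = bind_pmf (gw_Z off n) (\<lambda>z. iid_sum off z)"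

definition gw_pair :: "nat pmf \<Rightarrow> nat \<Rightarrow> (nat \<times> nat) pmf" where
  "gw_pair off n = bind_pmf (gw_Z off n) (\<lambda>z. map_pmf (\<lambda>z'. (z, z')) (iid_sum off z))"

definition gw_ext :: "nat pmf \<Rightarrow> nat \<Rightarrow> real" where
  "gw_ext off n = pmf (gw_Z off n) 0"

text \<open>Q[H = n] = Q[Z_n > 0, Z_(n+1) = 0], with H the height of the tree.\<close>
definition gw_height :: "nat pmf \<Rightarrow> nat \<Rightarrow> real" where
  "gw_height off n = measure_pmf.prob (gw_pair off n) {(a, b). a > 0 \<and> b = 0}"

text \<open>The conditioned (subcritical) offspring law q_k = p_k q^(k-1).\<close>
definition tilted :: "nat pmf \<Rightarrow> real \<Rightarrow> nat pmf" where
  "tilted p q = embed_pmf (\<lambda>k. pmf p k * q ^ k / q)"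

text \<open>Joint law of (phi_(n+1), psi_(n+1)) under Q, as given by the paper.\<close>
definition phipsi_law :: "nat pmf \<Rightarrow> real \<Rightarrow> nat \<Rightarrow> nat \<Rightarrow> nat \<Rightarrow> real" where
  "phipsi_law p q n j k =
     (let Qo = tilted p q;
          c = gw_height Qo n / gw_height Qo (Suc n)
      in if 1 \<le> j \<and> j \<le> k
         then c * pmf Qo k * gw_ext Qo n ^ (j - 1) * gw_ext Qo (Suc n) ^ (k - j)
         else 0)"

definition psi_law :: "nat pmf \<Rightarrow> real \<Rightarrow> nat \<Rightarrow> nat \<Rightarrow> real" where
  "psi_law p q n k = (\<Sum>j\<in>{1..k}. phipsi_law p q n j k)"

end

theory Submission
  imports Defs
begin

definition FF :: "nat pmf \<Rightarrow> real \<Rightarrow> ennreal" where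
  "FF Qo s = (\<integral>\<^sup>+k. ennreal (s^k) \<partial>Qo)"
definition ff :: "nat pmf \<Rightarrow> real \<Rightarrow> real" where
  "ff Qo s = enn2real (FF Qo s)"
definition GG :: "nat pmf \<Rightarrow> nat \<Rightarrow> real \<Rightarrow> ennreal" where
  "GG Qo n s = (\<integral>\<^sup>+z. ennreal (s^z) \<partial>gw_Z Qo n)"

lemma iid_gen:
  assumes "0 \<le> s"
  shows "(\<integral>\<^sup>+m. ennreal (s^m) \<partial>iid_sum Qo z) = FF Qo s ^ z"
proof (induction z)
  case 0
  then show ?case by simp
next
  case (Suc z)
  have "(\<integral>\<^sup>+m. ennreal (s^m) \<partial>iid_sum Qo (Suc z))
      = (\<integral>\<^sup>+x. \<integral>\<^sup>+y. ennreal (s^x) * ennreal (s^y) \<partial>iid_sum Qo z \<partial>Qo)"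
    using assms by (simp add: power_add ennreal_mult)
  also have "\<dots> = (\<integral>\<^sup>+x. ennreal (s^x) * FF Qo s ^ z \<partial>Qo)"
    by (simp add: nn_integral_cmult Suc)
  also have "\<dots> = FF Qo s * FF Qo s ^ z"
    by (simp add: nn_integral_multc FF_def)
  finally show ?case by simp
qed

lemma FF_le1: assumes "0 \<le> s" "s \<le> 1" shows "FF Qo s \<le> 1"
proof -
  have "FF Qo s \<le> (\<integral>\<^sup>+k. 1 \<partial>Qo)"
    unfolding FF_def using assms by (intro nn_integral_mono) (simp add: power_le_one)
  also have "\<dots> = 1" by simp
  finally show ?thesis .
qed

lemma FF_eq: assumes "0 \<le> s" "s \<le> 1" shows "FF Qo s = ennreal (ff Qo s)"
  using FF_le1[OF assms] unfolding ff_def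
  by (metis ennreal_enn2real ennreal_one_less_top order.strict_trans1 order_less_irrefl)

lemma ff_bounds: assumes "0 \<le> s" "s \<le> 1" shows "0 \<le> ff Qo s" "ff Qo s \<le> 1"
  using FF_le1[OF assms, of Qo] unfolding ff_def
  by (auto simp: enn2real_nonneg) (metis enn2real_mono enn2real_1 ennreal_one_less_top)

lemma GG_Suc: assumes "0 \<le> s" "s \<le> 1" shows "GG Qo (Suc n) s = GG Qo n (ff Qo s)"
  unfolding GG_def using assms
  by (simp add: iid_gen FF_eq ennreal_power ff_bounds)

lemma GG_iter: assumes "0 \<le> s" "s \<le> 1" shows "GG Qo n s = ennreal ((ff Qo ^^ n) s)"
  using assms
proof (induction n arbitrary: s)
  case 0
  then show ?case by (simp add: GG_def)
next
  case (Suc n)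
  then show ?case by (simp add: GG_Suc ff_bounds funpow_Suc_right del: funpow.simps)
qed

lemma ennreal_zero_pow: "ennreal ((0::real)^z) = indicator {0} z"
  by (cases z) auto

lemma iter_bounds: assumes "0 \<le> s" "s \<le> 1" shows "0 \<le> (ff Qo ^^ n) s \<and> (ff Qo ^^ n) s \<le> 1"
  by (induction n) (use assms in \<open>auto simp: ff_bounds\<close>)

lemma ext_iter: "pmf (gw_Z Qo n) 0 = (ff Qo ^^ n) 0"
proof -
  have "ennreal (pmf (gw_Z Qo n) 0) = GG Qo n 0"
    unfolding GG_def ennreal_zero_pow by (simp add: emeasure_pmf_single)
  also have "\<dots> = ennreal ((ff Qo ^^ n) 0)" by (simp add: GG_iter)
  finally show ?thesis
    using iter_bounds[where s=0 and Qo=Qo and n=n] by (simp add: pmf_nonneg)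
qed

lemma pmf_iid0: "pmf (iid_sum Qo z) 0 = ff Qo 0 ^ z"
proof -
  have "ennreal (pmf (iid_sum Qo z) 0) = (\<integral>\<^sup>+m. ennreal (0^m) \<partial>iid_sum Qo z)"
    unfolding ennreal_zero_pow by (simp add: emeasure_pmf_single)
  also have "\<dots> = ennreal (ff Qo 0 ^ z)"
    by (simp add: iid_gen FF_eq ennreal_power ff_bounds del: power_0_left)
  finally show ?thesis using ff_bounds[of 0 Qo] by (simp add: pmf_nonneg)
qed

lemma height_eq: "gw_height Qo n + pmf (gw_Z Qo n) 0 = pmf (gw_Z Qo (Suc n)) 0"
proof -
  have pre: "(Pair z) -` {(a, b). a > 0 \<and> b = (0::nat)} = (if 0 < z then {0} else {})" for z :: nat
    by auto
  have "ennreal (gw_height Qo n) = (\<integral>\<^sup>+z. ennreal (if 0 < z then ff Qo 0 ^ z else 0) \<partial>gw_Z Qo n)"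
    unfolding gw_height_def measure_pmf.emeasure_eq_measure[symmetric] gw_pair_def
    by (simp add: emeasure_map_pmf pre emeasure_pmf_single pmf_iid0 if_distrib cong: if_cong)
  moreover have "ennreal (pmf (gw_Z Qo n) 0) = (\<integral>\<^sup>+z. ennreal (if z = 0 then 1 else 0) \<partial>gw_Z Qo n)"
  proof -
    have "ennreal (pmf (gw_Z Qo n) 0) = (\<integral>\<^sup>+z. ennreal (0^z) \<partial>gw_Z Qo n)"
      unfolding ennreal_zero_pow by (simp add: emeasure_pmf_single)
    also have "\<dots> = (\<integral>\<^sup>+z. ennreal (if z = 0 then 1 else 0) \<partial>gw_Z Qo n)"
      by (intro nn_integral_cong) auto
    finally show ?thesis .
  qed
  ultimately have "ennreal (gw_height Qo n) + ennreal (pmf (gw_Z Qo n) 0)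
     = (\<integral>\<^sup>+z. ennreal (if 0 < z then ff Qo 0 ^ z else 0) + ennreal (if z = 0 then 1 else 0) \<partial>gw_Z Qo n)"
    by (simp add: nn_integral_add)
  also have "\<dots> = (\<integral>\<^sup>+z. ennreal (ff Qo 0 ^ z) \<partial>gw_Z Qo n)"
    by (intro nn_integral_cong) auto
  also have "\<dots> = GG Qo n (ff Qo 0)" by (simp add: GG_def)
  also have "\<dots> = ennreal ((ff Qo ^^ Suc n) 0)"
    by (simp add: GG_iter ff_bounds funpow_Suc_right del: funpow.simps)
  finally have eq0: "ennreal (gw_height Qo n) + ennreal (pmf (gw_Z Qo n) 0) = ennreal (pmf (gw_Z Qo (Suc n)) 0)"
    by (metis ext_iter)
  have eq: "ennreal (gw_height Qo n + pmf (gw_Z Qo n) 0) = ennreal (pmf (gw_Z Qo (Suc n)) 0)"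
    unfolding eq0[symmetric] by (rule ennreal_plus) (simp_all add: gw_height_def)
  have "0 \<le> gw_height Qo n + pmf (gw_Z Qo n) 0" by (simp add: gw_height_def pmf_nonneg)
  then show ?thesis using eq ennreal_inj[OF _ pmf_nonneg] by simp
qed


lemma ff_gap:
  assumes "0 \<le> y" "y \<le> x" "x \<le> 1"
  shows "ff Qo y + pmf Qo K * (x^K - y^K) \<le> ff Qo x"
proof -
  have x0: "0 \<le> x" using assms by simp
  have pt: "ennreal (y^k) + ennreal (x^K - y^K) * indicator {K} k \<le> ennreal (x^k)" for k
  proof (cases "k = K")
    case True
    then show ?thesis using assms
      by (simp add: ennreal_plus[symmetric] power_mono)
  next
    case False
    then show ?thesis using assms by (simp add: power_mono)
  qed
  have "FF Qo y + ennreal (x^K - y^K) * ennreal (pmf Qo K)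
      = (\<integral>\<^sup>+k. ennreal (y^k) + ennreal (x^K - y^K) * indicator {K} k \<partial>Qo)"
    by (simp add: nn_integral_add nn_integral_cmult FF_def emeasure_pmf_single)
  also have "\<dots> \<le> FF Qo x" unfolding FF_def by (intro nn_integral_mono pt)
  finally have "ennreal (ff Qo y + (x^K - y^K) * pmf Qo K) \<le> ennreal (ff Qo x)"
    using assms x0 by (simp add: FF_eq ennreal_plus ennreal_mult ff_bounds power_mono)
  moreover have "0 \<le> ff Qo x" using assms x0 by (simp add: ff_bounds)
  ultimately have "ff Qo y + (x^K - y^K) * pmf Qo K \<le> ff Qo x"
    using ennreal_le_iff by simp
  then show ?thesis by (simp add: mult.commute)
qed

lemma pow_gap:
  assumes "0 \<le> y" "y \<le> (x::real)" "1 \<le> K"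
  shows "x^(K-1) * (x - y) \<le> x^K - y^K"
proof -
  obtain L where K: "K = Suc L" using assms by (cases K) auto
  have "y * y^L \<le> y * x^L" using assms by (intro mult_left_mono power_mono) auto
  then show ?thesis unfolding K by (simp add: algebra_simps)
qed


theorem lemma1:
  fixes p :: "nat pmf" and q :: real
  assumes p0: "pmf p 0 > 0"
    and mean_fin: "summable (\<lambda>k. real k * pmf p k)"
    and supercrit: "(\<Sum>k. real k * pmf p k) > 1"
    and q_bounds: "0 < q" "q < 1"
    and q_fix: "gen_fun p q = q"
  shows "(\<exists>C::real. \<forall>n k. psi_law p q n k \<le> C * real k * q ^ k)
       \<and> (\<exists>B::real. \<forall>n. summable (\<lambda>k. real k * psi_law p q n k)
                      \<and> (\<Sum>k. real k * psi_law p q n k) \<le> B)"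
proof -
  define Qo where "Qo = tilted p q"
  have sum_pmf: "summable (pmf p)"
  proof (rule ccontr)
    assume "\<not> summable (pmf p)"
    then have "(\<Sum>i. ennreal (pmf p i)) = \<top>"
      by (intro summable_iff_suminf_neq_top) auto
    moreover have "(\<Sum>i. ennreal (pmf p i)) = 1"
      using nn_integral_pmf[where p=p and A=UNIV] by (simp add: nn_integral_count_space_nat)
    ultimately show False by simp
  qed
  have sum_pq: "summable (\<lambda>k. pmf p k * q^k)"
    by (rule summable_comparison_test[OF _ sum_pmf])
       (use q_bounds in \<open>auto intro!: exI[of _ 0] mult_left_le simp: power_le_one\<close>)
  have pmfQ: "pmf Qo k = pmf p k * q^k / q" for k
    unfolding Qo_def tilted_def
  proof (rule pmf_embed_pmf)
    show "0 \<le> pmf p k * q ^ k / q" for k using q_bounds by simp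
    have "(\<integral>\<^sup>+k. ennreal (pmf p k * q ^ k / q) \<partial>count_space UNIV)
        = ennreal (\<Sum>k. pmf p k * q ^ k / q)"
      using q_bounds sum_pq
      by (simp add: nn_integral_count_space_nat suminf_ennreal2 summable_divide)
    also have "(\<Sum>k. pmf p k * q ^ k / q) = 1"
      using q_fix q_bounds sum_pq by (simp add: suminf_divide gen_fun_def)
    finally show "(\<integral>\<^sup>+k. ennreal (pmf p k * q ^ k / q) \<partial>count_space UNIV) = 1" by simp
  qed
  obtain K where K1: "1 \<le> K" and pK: "pmf p K > 0"
  proof -
    have "\<exists>K. 1 \<le> K \<and> pmf p K > 0"
    proof (rule ccontr)
      assume "\<not> ?thesis"
      then have "\<And>k. real k * pmf p k = 0"
        using pmf_nonneg[of p] by (metis less_eq_real_def not_less_eq_eq of_nat_0 mult_eq_0_iff le0 Suc_leI not_gr0 One_nat_def)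
      then have "(\<lambda>k. real k * pmf p k) = (\<lambda>_. 0)" by (rule ext)
      then show False using supercrit by simp
    qed
    then show ?thesis using that by blast
  qed
  define qK where "qK = pmf Qo K"
  define q0 where "q0 = ff Qo 0"
  have qK_pos: "qK > 0" using pK q_bounds by (simp add: qK_def pmfQ)
  have q0_eq: "q0 = pmf Qo 0"
  proof -
    have "ennreal (pmf Qo 0) = FF Qo 0"
      unfolding FF_def ennreal_zero_pow by (simp add: emeasure_pmf_single)
    then have "ennreal (pmf Qo 0) = ennreal (ff Qo 0)" by (simp add: FF_eq)
    then show ?thesis unfolding q0_def using ff_bounds[of 0 Qo] pmf_nonneg ennreal_inj by force
  qed
  have q0_pos: "q0 > 0" using p0 q_bounds by (simp add: q0_eq pmfQ)
  define e where "e n = pmf (gw_Z Qo n) 0" for n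
  define h where "h n = gw_height Qo n" for n
  have he: "h n + e n = e (Suc n)" for n unfolding h_def e_def by (rule height_eq)
  have h0: "0 \<le> h n" for n by (simp add: h_def gw_height_def)
  have eb: "0 \<le> e n" "e n \<le> 1" for n by (simp_all add: e_def pmf_nonneg pmf_le_1)
  have eSuc: "e (Suc n) = ff Qo (e n)" for n unfolding e_def ext_iter by simp
  have e0: "e 0 = 0" unfolding e_def ext_iter by simp
  have e1: "q0 \<le> e (Suc n)" for n
  proof (induction n)
    case 0 then show ?case by (simp add: eSuc e0 q0_def)
  next
    case (Suc n) then show ?case using he[of "Suc n"] h0[of "Suc n"] by simp
  qed
  define m where "m = qK * q0^(K-1)"
  have m_pos: "m > 0" using qK_pos q0_pos by (simp add: m_def)
  have hstep: "m * h n \<le> h (Suc n)" for n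
  proof -
    have hn: "h n = e (Suc n) - e n" using he[of n] by simp
    have hs: "h (Suc n) = ff Qo (e (Suc n)) - ff Qo (e n)"
      using he[of "Suc n"] eSuc[of "Suc n"] eSuc[of n] by simp
    have le: "e n \<le> e (Suc n)" using hn h0[of n] by simp
    have "m * h n = qK * (q0^(K-1) * (e (Suc n) - e n))" by (simp add: m_def hn)
    also have "\<dots> \<le> qK * (e (Suc n)^(K-1) * (e (Suc n) - e n))"
      using qK_pos le q0_pos e1[of n]
      by (intro mult_left_mono mult_right_mono power_mono) auto
    also have "\<dots> \<le> qK * (e (Suc n)^K - e n ^K)"
      using qK_pos le eb K1 by (intro mult_left_mono pow_gap) auto
    also have "\<dots> \<le> h (Suc n)"
      unfolding hs qK_def using ff_gap[of "e n" "e (Suc n)" Qo K] eb le by simp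
    finally show ?thesis .
  qed
  have cbound: "h n / h (Suc n) \<le> 1 / m" for n
  proof (cases "h n = 0")
    case True then show ?thesis using m_pos by simp
  next
    case False
    then have hp: "h n > 0" using h0[of n] by simp
    then have "h (Suc n) > 0" using hstep[of n] m_pos by (smt (verit) mult_pos_pos)
    then show ?thesis using hstep[of n] hp m_pos by (simp add: field_simps)
  qed
  have cnn: "0 \<le> h n / h (Suc n)" for n using h0 by simp
  define C where "C = 1 / (m * q)"
  have phi_eq: "phipsi_law p q n j k = (h n / h (Suc n)) * pmf Qo k * (e n ^ (j - 1) * e (Suc n) ^ (k - j))"
    if "j \<in> {1..k}" for n j k
    using that unfolding phipsi_law_def Let_def
    by (simp add: h_def e_def gw_ext_def Qo_def[symmetric])
  have psi_nn: "0 \<le> psi_law p q n k" for n k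
    unfolding psi_law_def
    using cnn[of n] eb
  proof (intro sum_nonneg)
    fix j assume j: "j \<in> {1..k}"
    have "0 \<le> (h n / h (Suc n)) * pmf Qo k * (e n ^ (j - 1) * e (Suc n) ^ (k - j))"
      using cnn[of n] eb by (intro mult_nonneg_nonneg zero_le_power) (simp_all add: pmf_nonneg)
    then show "0 \<le> phipsi_law p q n j k" using phi_eq[OF j] by simp
  qed
  have psi_bd: "psi_law p q n k \<le> C * real k * q ^ k" for n k
  proof -
    have tm: "phipsi_law p q n j k \<le> (1/m) * (q^k / q)" if "j \<in> {1..k}" for j
    proof -
      have "phipsi_law p q n j k = (h n / h (Suc n)) * pmf Qo k * (e n ^ (j - 1) * e (Suc n) ^ (k - j))"
        using that by (rule phi_eq)
      also have "\<dots> \<le> (1/m) * (q^k / q) * 1"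
      proof (intro mult_mono)
        show "pmf Qo k \<le> q ^ k / q" using q_bounds pmf_le_1[of p k]
          by (simp add: pmfQ divide_right_mono mult_left_le_one_le)
        show "e n ^ (j - 1) * e (Suc n) ^ (k - j) \<le> 1"
          using eb by (simp add: power_le_one mult_le_one)
      qed (use cbound[of n] cnn[of n] eb q_bounds m_pos in \<open>simp_all add: pmf_nonneg\<close>)
      finally show ?thesis by simp
    qed
    have "psi_law p q n k \<le> real (card {1..k}) * ((1/m) * (q^k / q))"
      unfolding psi_law_def by (rule sum_bounded_above) (rule tm)
    also have "\<dots> = C * real k * q ^ k" by (simp add: C_def)
    finally show ?thesis .
  qed
  have C_nn: "0 \<le> C" using m_pos q_bounds by (simp add: C_def)
  define r where "r = root 3 q"
  have r: "0 < r" "r < 1" "r^3 = q" using q_bounds by (simp_all add: r_def real_root_lt_1_iff)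
  have ev: "eventually (\<lambda>k. real k * r^k < 1) sequentially"
    using r by (intro order_tendstoD(2)[OF powser_times_n_limit_0]) auto

  have sumk2: "summable (\<lambda>k. real k ^ 2 * q^k)"
  proof (rule summable_comparison_test_ev)
    show "eventually (\<lambda>k. norm (real k ^ 2 * q^k) \<le> r^k) sequentially"
      using ev
    proof eventually_elim
      case (elim k)
      have "real k ^ 2 * q^k = (real k * r^k)^2 * r^k"
        by (simp add: r(3)[symmetric] power_mult_distrib flip: power_mult power_add)
      also have "\<dots> \<le> 1 * r^k"
      proof (rule mult_right_mono)
        have "0 \<le> real k * r^k" using r by simp
        moreover have "real k * r^k \<le> 1" using elim by simp
        ultimately show "(real k * r ^ k)\<^sup>2 \<le> 1" unfolding power2_eq_square
          by (simp add: mult_le_one)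
      qed (use r in simp)
      finally show ?case using q_bounds by simp
    qed
    show "summable (\<lambda>k. r^k)" using r by (simp add: summable_geometric)
  qed
  have bdk: "real k * psi_law p q n k \<le> C * (real k ^ 2 * q^k)" for n k
    using mult_left_mono[OF psi_bd[of n k], of "real k"] by (simp add: power2_eq_square algebra_simps)
  have summ: "summable (\<lambda>k. real k * psi_law p q n k)" for n
  proof (rule summable_comparison_test[OF _ summable_mult[OF sumk2, of C]])
    show "\<exists>N. \<forall>k\<ge>N. norm (real k * psi_law p q n k) \<le> C * (real k ^ 2 * q^k)"
      using bdk psi_nn by (intro exI[of _ 0] allI impI) (simp add: abs_of_nonneg)
  qed

  show ?thesis
  proof (intro conjI exI allI)
    show "psi_law p q n k \<le> C * real k * q ^ k" for n k by (rule psi_bd)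
    show "summable (\<lambda>k. real k * psi_law p q n k)" for n by (rule summ)
    show "(\<Sum>k. real k * psi_law p q n k) \<le> (\<Sum>k. C * (real k ^ 2 * q^k))" for n
      by (rule suminf_le[OF bdk summ summable_mult[OF sumk2]])
  qed
qed

end
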